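(* The dendriform coalgebra $(\mathcal{A},\Delta_\leftarrow,\Delta_\rightarrow)$ is connected: for every $a\in\mathcal{A}^+$ there exists $n_a\in\mathbb{N}$ such that $P(a)=0$ for all $P\in\mathcal{P}(n_a)$.
   Context: Trees: planar rooted trees in which every internal vertex has at least two children; the root vertex hangs from a trunk edge; leaves are edges without upper vertex; $|$ is the one-leaf tree; $T_n$ = trees with $n+1$ leaves, $\mathcal A_n=\mathbb K T_n$, $\mathcal A=\bigoplus_n\mathcal A_n$, $\mathcal A^+=\bigoplus_{n\ge1}\mathcal A_n$, with the product $*$ of the Loday–Ronco free tridendriform algebra ($x_0\vee\cdots\vee x_k$ grafts trees on a new root; for $x=x^{(0)}\vee\cdots\vee x^{(k)}$, $y=y^{(0)}\vee\cdots\vee y^{(l)}$: $x\prec y=x^{(0)}\vee\cdots\vee x^{(k-1)}\vee(x^{(k)}*y)$, $x\cdot y=x^{(0)}\vee\cdots\vee x^{(k-1)}\vee(x^{(k)}*y^{(0)})\vee y^{(1)}\vee\cdots\vee y^{(l)}$, $x\succ y=(x*y^{(0)})\vee y^{(1)}\vee\cdots\vee y^{(l)}$, $*=\prec+\cdot+\succ$, $|*z=z*|=z$). Admissible cuts: internal edges join two internal vertices; a cut is a nonempty set of internal edges, plus the empty and total (below the root) cuts; admissible if every root-to-leaf path meets at most one chosen edge; $P^c(t)$ is the component containing the root, $G^c(t)=G^c_1(t)*\cdots*G^c_m(t)$ the product of the cut-off trees from left to right (empty cut: $P^c=t,G^c=|$; total cut: $P^c=|,G^c=t$). For $t\ne|$: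 $\Delta_\leftarrow(t)$ is the sum of $G^c(t)\otimes P^c(t)$ over admissible cuts with the right-most leaf of $t$ not in $P^c(t)$, $\Delta_\rightarrow(t)$ the sum over the others; the reduced maps are $\tilde\Delta_\leftarrow(t)=\Delta_\leftarrow(t)-t\otimes|$, $\tilde\Delta_\rightarrow(t)=\Delta_\rightarrow(t)-|\otimes t$, maps $\mathcal A^+\to\mathcal A^+\otimes\mathcal A^+$. $\mathcal P(0)=\{\mathrm{Id}\}$, $\mathcal P(1)=\{\tilde\Delta_\leftarrow,\tilde\Delta_\rightarrow\}$, and $\mathcal P(n)$ is the set of maps $(\mathrm{Id}^{\otimes(i-1)}\otimes D\otimes\mathrm{Id}^{\otimes(n-i)})\circ P$ with $P\in\mathcal P(n-1)$, $i\in\{1,\dots,n\}$, $D\in\{\tilde\Delta_\leftarrow,\tilde\Delta_\rightarrow\}$. *)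

theory Defs
  imports Main "HOL-Library.Multiset"
begin

text \<open>A tree is a root vertex (hanging from the trunk edge) with an ordered list of
  subtrees; Node [] is the one-leaf tree (a bare edge, no upper vertex).\<close>
datatype tree = Node "tree list"

abbreviation leaf :: tree where "leaf \<equiv> Node []"

fun wf_tree :: "tree \<Rightarrow> bool" where
  "wf_tree (Node ts) = (ts = [] \<or> (2 \<le> length ts \<and> (\<forall>c\<in>set ts. wf_tree c)))"

lemma size_mem_tree: "t \<in> set ts \<Longrightarrow> size t < size (Node ts)"
  by (induct ts) auto

lemma size_last_le: "xs \<noteq> [] \<Longrightarrow> size (last xs) \<le> size_list size xs"
  by (induct xs) auto

section \<open>Tridendriform product (linear combinations with natural multiplicities)\<close>

function star :: "tree \<Rightarrow> tree \<Rightarrow> tree multiset" where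
  "star (Node []) y = {#y#}"
| "star (Node (x#xs)) (Node []) = {#Node (x#xs)#}"
| "star (Node (x#xs)) (Node (y#ys)) =
     image_mset (\<lambda>w. Node (butlast (x#xs) @ [w])) (star (last (x#xs)) (Node (y#ys)))
   + image_mset (\<lambda>w. Node (butlast (x#xs) @ [w] @ ys)) (star (last (x#xs)) y)
   + image_mset (\<lambda>w. Node (w # ys)) (star (Node (x#xs)) y)"
  by pat_completeness auto
termination
  by (relation "measure (\<lambda>(a,b). size a + size b)")
     (auto dest: size_last_le)

fun prodL :: "tree list \<Rightarrow> tree multiset" where
  "prodL [] = {#leaf#}"
| "prodL (g#gs) = \<Sum>\<^sub># (image_mset (star g) (prodL gs))"

text \<open>cutsNT t lists the admissible cuts of t that do not cut the trunk (including the
  empty cut): each entry is (P^c(t), list of cut-off trees from left to right, flag), the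
  flag being True iff the right-most leaf of t is not in P^c(t).  At each child of the
  root either the child is a leaf, or the internal edge to the child is cut (the cut
  edge remains a leaf of P^c), or it is not cut and we recurse.\<close>
fun cutsNT :: "tree \<Rightarrow> (tree \<times> tree list \<times> bool) list" where
  "cutsNT (Node ts) =
     map (\<lambda>cs. (Node (map fst cs), concat (map (fst \<circ> snd) cs),
                (case rev cs of [] \<Rightarrow> False | c # _ \<Rightarrow> snd (snd c))))
       (product_lists (map (\<lambda>c. (if c = leaf then [] else [(leaf, [c], True)]) @ cutsNT c) ts))"

definition cuts :: "tree \<Rightarrow> (tree \<times> tree list \<times> bool) list" where
  "cuts t = (leaf, [t], True) # cutsNT t"

definition Delta_left :: "tree \<Rightarrow> (tree \<times> tree) multiset" where
  "Delta_left t = sum_list (map (\<lambda>(p, gs, f). if f then image_mset (\<lambda>g. (g, p)) (prodL gs) else {#})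
                              (cuts t))"

definition Delta_right :: "tree \<Rightarrow> (tree \<times> tree) multiset" where
  "Delta_right t = sum_list (map (\<lambda>(p, gs, f). if f then {#} else image_mset (\<lambda>g. (g, p)) (prodL gs))
                              (cuts t))"

text \<open>Reduced coproducts (only applied to trees different from the leaf).\<close>
definition rDelta_left :: "tree \<Rightarrow> (tree \<times> tree) multiset" where
  "rDelta_left t = Delta_left t - {#(t, leaf)#}"

definition rDelta_right :: "tree \<Rightarrow> (tree \<times> tree) multiset" where
  "rDelta_right t = Delta_right t - {#(leaf, t)#}"

text \<open>A map A^+ \<rightarrow> (A^+)^{\<otimes>(n+1)} is given on basis trees by a multiset of tensors
  (lists of length n+1).  applyAt i D applies D to the (i+1)-th tensor factor (0-based i).\<close>
definition applyAt :: "nat \<Rightarrow> (tree \<Rightarrow> (tree \<times> tree) multiset) \<Rightarrow> tree list \<Rightarrow> tree list multiset" where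
  "applyAt i D ts = image_mset (\<lambda>(a, b). take i ts @ [a, b] @ drop (Suc i) ts) (D (ts ! i))"

fun Pmaps :: "nat \<Rightarrow> (tree \<Rightarrow> tree list multiset) set" where
  "Pmaps 0 = {\<lambda>t. {#[t]#}}"
| "Pmaps (Suc n) = {(\<lambda>t. \<Sum>\<^sub># (image_mset (applyAt i D) (P t))) | P i D.
                      P \<in> Pmaps n \<and> i \<le> n \<and> D \<in> {rDelta_left, rDelta_right}}"

definition in_Aplus :: "(tree \<Rightarrow> 'k::field) \<Rightarrow> bool" where
  "in_Aplus a \<longleftrightarrow> finite {t. a t \<noteq> 0} \<and> (\<forall>t. a t \<noteq> 0 \<longrightarrow> wf_tree t \<and> t \<noteq> leaf)"

text \<open>Linear extension of a map given on basis trees; the result is the coefficient function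
  of the resulting element of the tensor power.\<close>
definition lin_ext :: "(tree \<Rightarrow> tree list multiset) \<Rightarrow> (tree \<Rightarrow> 'k::field) \<Rightarrow> tree list \<Rightarrow> 'k" where
  "lin_ext P a = (\<lambda>ts. \<Sum>t\<in>{t. a t \<noteq> 0}. a t * of_nat (count (P t) ts))"

end

theory Submission
  imports Defs
begin

fun nint :: "tree \<Rightarrow> nat" where
  "nint (Node ts) = (if ts = [] then 0 else 1 + sum_list (map nint ts))"

lemma sum_list_butlast_last:
  "xs \<noteq> [] \<Longrightarrow> sum_list (map f xs) = sum_list (map f (butlast xs)) + f (last xs)"
  by (induct xs rule: rev_induct) auto

lemma nint_app: "nint (Node (B @ [w] @ C)) = 1 + sum_list (map nint B) + nint w + sum_list (map nint C)"
  by simp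

lemma nint_ne: "ts \<noteq> [] \<Longrightarrow> nint (Node ts) = 1 + sum_list (map nint ts)"
  by simp

lemma star_props:
  "w \<in># star x y \<Longrightarrow> nint w \<le> nint x + nint y \<and> (w = leaf \<longrightarrow> x = leaf \<and> y = leaf)"
proof (induction x y arbitrary: w rule: star.induct)
  case (1 y)
  then show ?case by simp
next
  case (2 x xs)
  then show ?case by simp
next
  case (3 x xs y ys)
  let ?X = "x#xs"
  have sX: "sum_list (map nint ?X) = sum_list (map nint (butlast ?X)) + nint (last ?X)"
    by (rule sum_list_butlast_last) simp
  have nX: "nint (Node ?X) = 1 + sum_list (map nint ?X)" by (rule nint_ne) simp
  have nY: "nint (Node (y#ys)) = 1 + nint y + sum_list (map nint ys)" by simp
  from "3.prems" consider
      (a) w' where "w' \<in># star (last ?X) (Node (y#ys))" "w = Node (butlast ?X @ [w'])"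
    | (b) w' where "w' \<in># star (last ?X) y" "w = Node (butlast ?X @ [w'] @ ys)"
    | (c) w' where "w' \<in># star (Node ?X) y" "w = Node (w' # ys)"
    by auto
  then show ?case
  proof cases
    case a
    have e: "nint w = 1 + sum_list (map nint (butlast ?X)) + nint w' + sum_list (map nint [])"
      unfolding a(2) using nint_app[of "butlast ?X" w' "[]"] by simp
    have "w \<noteq> leaf" unfolding a(2) by simp
    moreover have "nint w \<le> nint (Node ?X) + nint (Node (y#ys))"
      using conjunct1[OF "3.IH"(1)[OF a(1)]] sX nX e by (simp only: list.map sum_list.Nil)
    ultimately show ?thesis by blast
  next
    case b
    have e: "nint w = 1 + sum_list (map nint (butlast ?X)) + nint w' + sum_list (map nint ys)"
      unfolding b(2) by (rule nint_app)
    have "w \<noteq> leaf" unfolding b(2) by simp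
    moreover have "nint w \<le> nint (Node ?X) + nint (Node (y#ys))"
      using conjunct1[OF "3.IH"(2)[OF b(1)]] sX nX nY e by linarith
    ultimately show ?thesis by blast
  next
    case c
    have e: "nint w = 1 + sum_list (map nint []) + nint w' + sum_list (map nint ys)"
      unfolding c(2) by simp
    have "w \<noteq> leaf" unfolding c(2) by simp
    moreover have "nint w \<le> nint (Node ?X) + nint (Node (y#ys))"
      using conjunct1[OF "3.IH"(3)[OF c(1)]] nY e by simp
    ultimately show ?thesis by blast
  qed
qed

lemma prodL_props:
  "g \<in># prodL gs \<Longrightarrow> nint g \<le> sum_list (map nint gs) \<and> (g = leaf \<longrightarrow> (\<forall>h\<in>set gs. h = leaf))"
proof (induction gs arbitrary: g)
  case Nil
  then have "g = leaf" by simp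
  then show ?case by simp
next
  case (Cons h gs)
  have "g \<in># \<Sum>\<^sub># (image_mset (star h) (prodL gs))" using Cons.prems by (simp only: prodL.simps(2))
  then obtain M where M1: "M \<in># image_mset (star h) (prodL gs)" and M2: "g \<in># M"
    unfolding in_Union_mset_iff by (elim exE conjE)
  from M1 have "M \<in> star h ` set_mset (prodL gs)" by (simp only: in_image_mset)
  then obtain g' where g1: "g' \<in># prodL gs" and g2: "M = star h g'"
    by (elim imageE)
  from M2 g2 have gs': "g \<in># star h g'" by (simp only:)
  note SP = star_props[OF gs']
  note IH = Cons.IH[OF g1]
  have A: "nint g \<le> nint h + nint g'" using SP by (rule conjunct1)
  have B: "g = leaf \<longrightarrow> h = leaf \<and> g' = leaf" using SP by (rule conjunct2)
  have C: "nint g' \<le> sum_list (map nint gs)" using IH by (rule conjunct1)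
  have D: "g' = leaf \<longrightarrow> (\<forall>x\<in>set gs. x = leaf)" using IH by (rule conjunct2)
  have E: "sum_list (map nint (h # gs)) = nint h + sum_list (map nint gs)"
    by (simp only: list.map sum_list.Cons)
  have F: "nint g \<le> sum_list (map nint (h # gs))" unfolding E using A C by linarith
  have G: "g = leaf \<longrightarrow> (\<forall>x\<in>set (h # gs). x = leaf)"
  proof
    assume "g = leaf"
    with B have "h = leaf" "g' = leaf" by simp_all
    with D show "\<forall>x\<in>set (h # gs). x = leaf" by simp
  qed
  show ?case using F G by (rule conjI)
qed

lemma concat_map_if_filter:
  "concat (map (\<lambda>x. if Q x then f x else []) a) = concat (map f (filter Q a))"
  by (induct a) auto

lemma filter_product_lists:
  "filter (\<lambda>cs. \<forall>c\<in>set cs. Q c) (product_lists Ls) = product_lists (map (filter Q) Ls)"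
proof (induct Ls)
  case Nil
  then show ?case by simp
next
  case (Cons a Ls)
  have "\<And>x. filter (\<lambda>cs. \<forall>c\<in>set cs. Q c) (map ((#) x) (product_lists Ls)) =
     (if Q x then map ((#) x) (product_lists (map (filter Q) Ls)) else [])"
    using Cons by (simp add: filter_map comp_def)
  then show ?case by (simp add: filter_concat comp_def concat_map_if_filter)
qed


lemma sum_list_le_list_all2:
  "list_all2 (\<lambda>c t. h c \<le> (k t::nat)) cs ts \<Longrightarrow> sum_list (map h cs) \<le> sum_list (map k ts)"
  by (induct rule: list_all2_induct) auto

definition goodw :: "tree \<Rightarrow> tree \<times> tree list \<times> bool \<Rightarrow> bool" where
  "goodw t c \<longleftrightarrow> (case c of (p, gs, f) \<Rightarrow>
     nint p + sum_list (map nint gs) \<le> nint t \<and> (\<forall>g\<in>set gs. g \<noteq> leaf) \<and> (f \<longrightarrow> gs \<noteq> []))"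

definition goodcut :: "tree \<Rightarrow> tree \<times> tree list \<times> bool \<Rightarrow> bool" where
  "goodcut t c \<longleftrightarrow> goodw t c \<and> (case c of (p, gs, f) \<Rightarrow>
     (p = leaf \<longrightarrow> gs = [] \<and> \<not> f))"

lemma cutsNT_good: "c \<in> set (cutsNT t) \<Longrightarrow> goodcut t c"
proof (induction t arbitrary: c)
  case (Node ts)
  define opt where "opt = (\<lambda>c. (if c = leaf then [] else [(leaf, [c], True)]) @ cutsNT c)"
  from Node.prems obtain cs where cs: "cs \<in> set (product_lists (map opt ts))"
    and c: "c = (Node (map fst cs), concat (map (fst \<circ> snd) cs),
                (case rev cs of [] \<Rightarrow> False | c # _ \<Rightarrow> snd (snd c)))"
    by (auto simp: opt_def)
  from cs have la: "list_all2 (\<lambda>x ys. x \<in> set ys) cs (map opt ts)"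
    by (simp add: product_lists_set)
  have optgood: "x \<in> set (opt t') \<Longrightarrow> t' \<in> set ts \<Longrightarrow> goodw t' x" for x t'
  proof -
    assume x: "x \<in> set (opt t')" and t: "t' \<in> set ts"
    show ?thesis
    proof (cases "x \<in> set (cutsNT t')")
      case True then have "goodcut t' x" using Node.IH t by blast
      then show ?thesis by (simp add: goodcut_def)
    next
      case False with x have "x = (leaf,[t'],True) \<and> t' \<noteq> leaf" by (auto simp: opt_def split: if_splits)
      then show ?thesis by (simp add: goodw_def)
    qed
  qed
  have la2: "list_all2 (\<lambda>x t'. goodw t' x) cs ts"
  proof -
    have l: "length cs = length ts" "\<forall>i<length ts. cs ! i \<in> set (opt (ts ! i))"
      using la by (auto simp: list_all2_conv_all_nth)
    have "goodw (ts ! i) (cs ! i)" if "i < length ts" for i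
      using optgood[of "cs ! i" "ts ! i"] l that nth_mem by blast
    then show ?thesis using l by (simp add: list_all2_conv_all_nth)
  qed
  have len: "length cs = length ts" using la2 by (simp add: list_all2_lengthD)
  have sumle: "sum_list (map (\<lambda>x. nint (fst x) + sum_list (map nint (fst (snd x)))) cs)
       \<le> sum_list (map nint ts)"
    by (rule sum_list_le_list_all2) (rule list_all2_mono[OF la2], auto simp: goodw_def)
  have nonleaf: "\<forall>g\<in>set (concat (map (fst \<circ> snd) cs)). g \<noteq> leaf"
  proof
    fix g assume "g \<in> set (concat (map (fst \<circ> snd) cs))"
    then obtain x where x: "x \<in> set cs" "g \<in> set (fst (snd x))" by auto
    then obtain i where i: "i < length cs" "cs ! i = x" by (auto simp: in_set_conv_nth)
    with la2 have "goodw (ts ! i) x" by (auto simp: list_all2_conv_all_nth)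
    with x(2) show "g \<noteq> leaf" by (auto simp: goodw_def split: prod.splits)
  qed
  have sumconcat: "sum_list (map nint (concat (map (fst \<circ> snd) cs)))
      = sum_list (map (\<lambda>x. sum_list (map nint (fst (snd x)))) cs)"
    by (induct cs) auto
  have sumsplit: "sum_list (map (\<lambda>x. nint (fst x) + sum_list (map nint (fst (snd x)))) cs)
      = sum_list (map (\<lambda>x. nint (fst x)) cs) + sum_list (map (\<lambda>x. sum_list (map nint (fst (snd x)))) cs)"
    by (simp add: sum_list_addf)
  have flag: "(case rev cs of [] \<Rightarrow> False | c # _ \<Rightarrow> snd (snd c)) \<Longrightarrow> concat (map (fst \<circ> snd) cs) \<noteq> []"
  proof -
    assume h: "(case rev cs of [] \<Rightarrow> False | c # _ \<Rightarrow> snd (snd c))"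
    then have ne: "cs \<noteq> []" by auto
    then have "rev cs = last cs # tl (rev cs)"
      by (metis hd_rev list.collapse rev_is_Nil_conv)
    with h have fl: "snd (snd (last cs))" by (auto split: list.splits)
    have "last cs \<in> set cs" using ne by simp
    then obtain i where i: "i < length cs" "cs ! i = last cs" by (auto simp: in_set_conv_nth)
    with la2 have "goodw (ts ! i) (last cs)" by (auto simp: list_all2_conv_all_nth)
    with fl have "fst (snd (last cs)) \<noteq> []" by (auto simp: goodw_def split: prod.splits)
    with \<open>last cs \<in> set cs\<close> show ?thesis by auto
  qed
  show ?case
  proof (cases "ts = []")
    case True
    with len have "cs = []" by simp
    with c True show ?thesis by (simp add: goodcut_def goodw_def)
  next
    case False
    with len have "cs \<noteq> []" by auto
    then have n1: "nint (Node (map fst cs)) = 1 + sum_list (map (\<lambda>x. nint (fst x)) cs)"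
      by (simp add: comp_def)
    have n2: "nint (Node ts) = 1 + sum_list (map nint ts)" using False by simp
    have p1: "nint (Node (map fst cs)) + sum_list (map nint (concat (map (fst \<circ> snd) cs))) \<le> nint (Node ts)"
      unfolding n1 n2 sumconcat using sumle sumsplit by linarith
    have p2: "Node (map fst cs) \<noteq> leaf" using \<open>cs \<noteq> []\<close> by simp
    have gen: "\<And>p gs f. nint p + sum_list (map nint gs) \<le> nint (Node ts) \<Longrightarrow> \<forall>g\<in>set gs. g \<noteq> leaf
       \<Longrightarrow> (f \<longrightarrow> gs \<noteq> []) \<Longrightarrow> p \<noteq> leaf \<Longrightarrow> goodcut (Node ts) (p, gs, f)"
      by (simp add: goodcut_def goodw_def)
    show ?thesis unfolding c by (rule gen[OF p1 nonleaf _ p2]) (use flag in blast)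
  qed
qed


lemma product_lists_singletons: "product_lists (map (\<lambda>c. [f c]) ts) = [map f ts]"
  by (induct ts) auto

lemma cutsNT_empty:
  "filter (\<lambda>x. fst (snd x) = []) (cutsNT t) = [(t, [], False)]"
proof (induction t)
  case (Node ts)
  define opt where "opt = (\<lambda>c. (if c = leaf then [] else [(leaf, [c], True)]) @ cutsNT c)"
  define F where "F = (\<lambda>cs. (Node (map fst cs), concat (map (fst \<circ> snd) cs),
                (case rev cs of [] \<Rightarrow> False | c # _ \<Rightarrow> snd (snd (c::tree \<times> tree list \<times> bool)))))"
  let ?Q = "\<lambda>x::tree \<times> tree list \<times> bool. fst (snd x) = []"
  have cu: "cutsNT (Node ts) = map F (product_lists (map opt ts))"
    by (simp add: F_def opt_def)
  have "filter ?Q (map F (product_lists (map opt ts)))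
      = map F (filter (\<lambda>cs. \<forall>c\<in>set cs. ?Q c) (product_lists (map opt ts)))"
    by (simp add: filter_map comp_def F_def)
  also have "\<dots> = map F (product_lists (map (filter ?Q) (map opt ts)))"
    by (simp add: filter_product_lists)
  also have "map (filter ?Q) (map opt ts) = map (\<lambda>c. [(c, [], False)]) ts"
    using Node.IH by (auto simp: opt_def)
  also have "product_lists (map (\<lambda>c. [(c, [], False)]) ts) = [map (\<lambda>c. (c, [], False)) ts]"
    by (rule product_lists_singletons)
  also have "map F [map (\<lambda>c. (c, [], False)) ts] = [(Node ts, [], False)]"
    by (cases "rev ts") (simp_all add: F_def comp_def rev_map)
  finally show ?case using cu by simp
qed


definition goodp :: "tree \<Rightarrow> tree \<times> tree \<Rightarrow> bool" where
  "goodp t x \<longleftrightarrow> fst x \<noteq> leaf \<and> snd x \<noteq> leaf \<and> nint (fst x) + nint (snd x) \<le> nint t"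

lemma star_leaf_right: "star t leaf = {#t#}"
proof (cases t)
  case (Node ts)
  then show ?thesis by (cases ts) simp_all
qed

lemma prodL_single: "prodL [t] = {#t#}"
  by (simp add: star_leaf_right)

lemma in_sum_list_map: "x \<in># sum_list (map h L) \<Longrightarrow> \<exists>c\<in>set L. x \<in># h c"
  by (induct L) auto

lemma sum_list_filter_split:
  "sum_list (map h L) = sum_list (map h (filter Q L)) + sum_list (map h (filter (\<lambda>x. \<not> Q x) L))"
  for h :: "'a \<Rightarrow> 'b multiset"
  by (induct L) (auto simp: ac_simps)

lemma prodL_nonleaf:
  assumes "g \<in># prodL gs" "gs \<noteq> []" "\<forall>h\<in>set gs. h \<noteq> leaf"
  shows "g \<noteq> leaf \<and> nint g \<le> sum_list (map nint gs)"
  using prodL_props[OF assms(1)] assms(2,3) by (cases gs) auto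

lemma rDelta_left_good: "x \<in># rDelta_left t \<Longrightarrow> goodp t x"
proof -
  let ?h = "\<lambda>(p, gs, f). if f then image_mset (\<lambda>g. (g, p)) (prodL gs) else {#}"
  have "Delta_left t = {#(t, leaf)#} + sum_list (map ?h (cutsNT t))"
    by (simp add: Delta_left_def cuts_def prodL_single star_leaf_right)
  then have e: "rDelta_left t = sum_list (map ?h (cutsNT t))"
    by (simp add: rDelta_left_def)
  assume "x \<in># rDelta_left t"
  with e obtain c where c: "c \<in> set (cutsNT t)" "x \<in># ?h c" by (auto dest: in_sum_list_map)
  obtain p gs f where cp: "c = (p, gs, f)" by (cases c) auto
  from cutsNT_good[OF c(1)] cp have gc: "goodcut t (p, gs, f)" by simp
  from c(2) cp obtain g where f: f and g: "g \<in># prodL gs" and x: "x = (g, p)"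
    by (auto split: if_splits)
  from gc f have "gs \<noteq> []" "\<forall>h\<in>set gs. h \<noteq> leaf" "p \<noteq> leaf"
    "nint p + sum_list (map nint gs) \<le> nint t"
    by (auto simp: goodcut_def goodw_def)
  with prodL_nonleaf[OF g] x show ?thesis by (auto simp: goodp_def)
qed

lemma rDelta_right_good: "x \<in># rDelta_right t \<Longrightarrow> goodp t x"
proof -
  let ?h = "\<lambda>(p, gs, f). if f then {#} else image_mset (\<lambda>g. (g, p)) (prodL gs)"
  let ?Q = "\<lambda>x::tree \<times> tree list \<times> bool. fst (snd x) = []"
  have "Delta_right t = sum_list (map ?h (cutsNT t))"
    by (simp add: Delta_right_def cuts_def)
  also have "\<dots> = sum_list (map ?h (filter ?Q (cutsNT t)))
       + sum_list (map ?h (filter (\<lambda>x. \<not> ?Q x) (cutsNT t)))"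
    by (rule sum_list_filter_split)
  also have "sum_list (map ?h (filter ?Q (cutsNT t))) = {#(leaf, t)#}"
    by (simp add: cutsNT_empty)
  finally have e: "rDelta_right t = sum_list (map ?h (filter (\<lambda>x. \<not> ?Q x) (cutsNT t)))"
    by (simp add: rDelta_right_def)
  assume "x \<in># rDelta_right t"
  with e obtain c where c: "c \<in> set (cutsNT t)" "\<not> ?Q c" "x \<in># ?h c"
    by (auto dest: in_sum_list_map)
  obtain p gs f where cp: "c = (p, gs, f)" by (cases c) auto
  from cutsNT_good[OF c(1)] cp have gc: "goodcut t (p, gs, f)" by simp
  from c(3) cp obtain g where g: "g \<in># prodL gs" and x: "x = (g, p)"
    by (auto split: if_splits)
  from c(2) cp have ne: "gs \<noteq> []" by simp
  from gc ne have "\<forall>h\<in>set gs. h \<noteq> leaf" "p \<noteq> leaf"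
    "nint p + sum_list (map nint gs) \<le> nint t"
    by (auto simp: goodcut_def goodw_def)
  with prodL_nonleaf[OF g ne] x show ?thesis by (auto simp: goodp_def)
qed

lemma nint_pos: "s \<noteq> leaf \<Longrightarrow> 1 \<le> nint s"
  by (cases s) auto

lemma length_le_sum: "\<forall>s\<in>set ts. s \<noteq> leaf \<Longrightarrow> length ts \<le> sum_list (map nint ts)"
  by (induct ts) (auto dest: nint_pos)

lemma Pmaps_inv:
  "P \<in> Pmaps n \<Longrightarrow> t \<noteq> leaf \<Longrightarrow> ts \<in># P t \<Longrightarrow>
    length ts = Suc n \<and> (\<forall>s\<in>set ts. s \<noteq> leaf) \<and> sum_list (map nint ts) \<le> nint t"
proof (induction n arbitrary: P ts)
  case 0
  then show ?case by simp
next
  case (Suc n)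
  from Suc.prems(1) obtain Q i D where PQ: "P = (\<lambda>t. \<Sum>\<^sub># (image_mset (applyAt i D) (Q t)))"
    and Q: "Q \<in> Pmaps n" and i: "i \<le> n" and D: "D \<in> {rDelta_left, rDelta_right}"
    by auto
  from Suc.prems(3) PQ obtain us where us: "us \<in># Q t" "ts \<in># applyAt i D us"
    by auto
  from Suc.IH[OF Q Suc.prems(2) us(1)] have
    IH: "length us = Suc n" "\<forall>s\<in>set us. s \<noteq> leaf" "sum_list (map nint us) \<le> nint t"
    by auto
  from us(2) obtain a b where ab: "(a, b) \<in># D (us ! i)"
    and ts: "ts = take i us @ [a, b] @ drop (Suc i) us"
    by (auto simp: applyAt_def)
  from D ab have gp: "goodp (us ! i) (a, b)"
    using rDelta_left_good rDelta_right_good by auto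
  have il: "i < length us" using i IH(1) by simp
  have dec: "us = take i us @ us ! i # drop (Suc i) us"
    using il by (simp add: id_take_nth_drop)
  have "sum_list (map nint us) = sum_list (map nint (take i us)) + nint (us ! i)
       + sum_list (map nint (drop (Suc i) us))"
    by (subst dec) simp
  moreover have "set (take i us) \<subseteq> set us" "set (drop (Suc i) us) \<subseteq> set us"
    by (auto simp: set_take_subset set_drop_subset)
  ultimately show ?case using ts gp IH il by (auto simp: goodp_def)
qed

theorem mainTheorem13:
  fixes a :: "tree \<Rightarrow> 'k::field"
  assumes "in_Aplus a"
  shows "\<exists>n. \<forall>P\<in>Pmaps n. lin_ext P a = (\<lambda>_. 0)"
proof -
  define S where "S = {t. a t \<noteq> 0}"
  have fin: "finite S" and nl: "\<And>t. t \<in> S \<Longrightarrow> t \<noteq> leaf"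
    using assms by (auto simp: in_Aplus_def S_def)
  define N where "N = (\<Sum>t\<in>S. nint t)"
  have emp: "P t = {#}" if P: "P \<in> Pmaps N" and t: "t \<in> S" for P t
  proof (rule ccontr)
    assume "P t \<noteq> {#}"
    then obtain ts where ts: "ts \<in># P t" by blast
    from Pmaps_inv[OF P nl[OF t] ts] length_le_sum[of ts]
    have "Suc N \<le> nint t" by auto
    moreover have "nint t \<le> N" unfolding N_def by (rule member_le_sum[OF t _ fin]) simp
    ultimately show False by simp
  qed
  show ?thesis
  proof (intro exI ballI)
    fix P assume P: "P \<in> Pmaps N"
    show "lin_ext P a = (\<lambda>_. 0)"
      unfolding lin_ext_def using emp[OF P] by (simp add: S_def)
  qed
qed

end
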